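(* Let $f\colon S^1\to S^1$ be a homeomorphism of the circle such that the restriction $f|_{\Omega(f)}$ of $f$ to its nonwandering set has the pseudo-orbit tracing property. Then $f$ has a periodic point.
   Context: The nonwandering set $\Omega(f)$ is the set of $x$ such that for every neighborhood $U$ of $x$ there is $n\ge1$ with $f^n(U)\cap U\neq\emptyset$; it is compact and $f$-invariant. For a homeomorphism $g\colon Y\to Y$ of a metric space $(Y,d)$: a bi-infinite sequence $(x_i)_{i\in\mathbb{Z}}$ is a $\delta$-pseudo-orbit if $d(g(x_i),x_{i+1})\le\delta$ for all $i$; it is $\epsilon$-shadowed if there is $x\in Y$ with $d(g^i(x),x_i)\le\epsilon$ for all $i\in\mathbb{Z}$; $g$ has the pseudo-orbit tracing property if for every $\epsilon>0$ there is $\delta>0$ such that every $\delta$-pseudo-orbit can be $\epsilon$-shadowed. *)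

theory Defs
  imports "HOL-Analysis.Analysis"
begin

definition circle :: "complex set" where
  "circle = sphere 0 1"

definition nonwandering :: "'a::topological_space set \<Rightarrow> ('a \<Rightarrow> 'a) \<Rightarrow> 'a set" where
  "nonwandering X f = {x \<in> X. \<forall>U. openin (top_of_set X) U \<and> x \<in> U \<longrightarrow>
                                  (\<exists>n\<ge>1. (f ^^ n) ` U \<inter> U \<noteq> {})}"

definition int_iter :: "'a set \<Rightarrow> ('a \<Rightarrow> 'a) \<Rightarrow> int \<Rightarrow> 'a \<Rightarrow> 'a" where
  "int_iter Y g i x = (if 0 \<le> i then (g ^^ nat i) x else (inv_into Y g ^^ nat (- i)) x)"

definition POTP :: "'a::metric_space set \<Rightarrow> ('a \<Rightarrow> 'a) \<Rightarrow> bool" where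
  "POTP Y g \<longleftrightarrow> (\<forall>\<epsilon>>0. \<exists>\<delta>>0. \<forall>xs :: int \<Rightarrow> 'a.
      (\<forall>i. xs i \<in> Y) \<and> (\<forall>i. dist (g (xs i)) (xs (i + 1)) \<le> \<delta>) \<longrightarrow>
      (\<exists>x\<in>Y. \<forall>i. dist (int_iter Y g i x) (xs i) \<le> \<epsilon>))"

end

theory Submission
  imports Defs
begin
definition ee :: "real \<Rightarrow> complex" where "ee t = exp (\<i> * of_real t)"

lemma ee_circle[simp]: "ee t \<in> circle"
  by (simp add: ee_def circle_def norm_exp_i_times)

lemma norm_ee[simp]: "norm (ee t) = 1"
  by (simp add: ee_def norm_exp_i_times)

lemma ee_add: "ee (s + t) = ee s * ee t"
  by (simp add: ee_def distrib_left exp_add)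

lemma ee_eq: "ee s = ee t \<longleftrightarrow> (\<exists>m::int. s = t + 2 * pi * m)"
proof -
  have "ee s = ee t \<longleftrightarrow> (\<exists>n::int. \<i> * of_real s = \<i> * of_real t + (of_int (2 * n) * pi) * \<i>)"
    unfolding ee_def by (rule exp_eq)
  also have "\<dots> \<longleftrightarrow> (\<exists>m::int. s = t + 2 * pi * m)"
  proof -
    have "\<i> * of_real s = \<i> * of_real t + (of_int (2 * n) * pi) * \<i> \<longleftrightarrow> s = t + 2 * pi * n" for n :: int
    proof -
      have "\<i> * of_real s = \<i> * of_real t + (of_int (2 * n) * pi) * \<i> \<longleftrightarrow>
            \<i> * of_real s = \<i> * of_real (t + 2 * pi * n)" by (simp add: algebra_simps)
      also have "\<dots> \<longleftrightarrow> s = t + 2 * pi * n"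
        using of_real_eq_iff[of s "t + 2*pi*n", where 'a=complex] by simp
      finally show ?thesis .
    qed
    then show ?thesis by blast
  qed
  finally show ?thesis .
qed

lemma ee_shift[simp]: "ee (t + 2 * pi * of_int m) = ee t"
  using ee_eq by blast

lemma circle_ee: "z \<in> circle \<Longrightarrow> \<exists>t. z = ee t"
proof -
  assume "z \<in> circle"
  then have "norm z = 1" by (simp add: circle_def)
  then have "z \<noteq> 0" by auto
  from Arg_eq[OF this] \<open>norm z = 1\<close> show ?thesis by (auto simp: ee_def)
qed

lemma ee_close:
  assumes "\<eta> > 0"
  shows "\<exists>\<epsilon>>0. \<forall>s t. norm (ee s - ee t) \<le> \<epsilon> \<longrightarrow> (\<exists>m::int. \<bar>s - t - 2 * pi * m\<bar> \<le> \<eta>)"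
proof -
  have "(1::complex) \<notin> \<real>\<^sub>\<le>\<^sub>0" by (simp add: nonpos_Reals_def)
  then have "continuous (at 1) Arg" by (rule continuous_at_Arg)
  then obtain d where d: "d > 0" "\<And>z. dist z 1 < d \<Longrightarrow> dist (Arg z) (Arg 1) < \<eta>"
    using assms unfolding continuous_at_eps_delta by blast
  show ?thesis
  proof (intro exI[of _ "d/2"] conjI allI impI)
    show "d/2 > 0" using d by simp
    fix s t assume st: "norm (ee s - ee t) \<le> d/2"
    have "ee s = ee (s - t) * ee t" using ee_add[of "s-t" t] by simp
    then have "norm (ee s - ee t) = norm (ee (s - t) - 1)"
      by (metis mult.commute mult.right_neutral norm_ee norm_mult right_diff_distrib)
    with st d have "dist (ee (s - t)) 1 < d" by (simp add: dist_norm)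
    with d have A: "\<bar>Arg (ee (s - t))\<bar> < \<eta>" by (simp add: dist_real_def)
    obtain k where "Im (\<i> * of_real (s - t)) - real_of_int k * (2 * pi) = Arg (ee (s - t))"
      using Arg_exp_diff_2pi unfolding ee_def by blast
    then have "s - t - 2 * pi * k = Arg (ee (s - t))" by (simp add: algebra_simps)
    with A show "\<exists>m::int. \<bar>s - t - 2 * pi * m\<bar> \<le> \<eta>" by (intro exI[of _ k]) simp
  qed
qed

lemma lift_exists:
  assumes "continuous_on circle f" "f ` circle \<subseteq> circle"
  obtains F where "continuous_on UNIV F" "\<And>t. f (ee t) = ee (F t)"
proof -
  have ce: "continuous_on UNIV ee" unfolding ee_def by (intro continuous_intros)
  have c: "continuous_on UNIV (f \<circ> ee)"
    using continuous_on_compose[OF ce, of f] assms(1) by (simp add: image_subset_iff continuous_on_subset)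
  have nz: "(f \<circ> ee) t \<noteq> 0" for t
  proof -
    have "f (ee t) \<in> circle" using assms(2) ee_circle[of t] by blast
    then show ?thesis by (auto simp: circle_def)
  qed
  obtain g where g: "continuous_on UNIV g" "\<And>t. (f \<circ> ee) t = exp (g t)"
    using continuous_logarithm_on_contractible[OF c convex_imp_contractible[OF convex_UNIV] nz]
    by (metis UNIV_I)
  show ?thesis
  proof (rule that[of "\<lambda>t. Im (g t)"])
    show "continuous_on UNIV (\<lambda>t. Im (g t))" by (intro continuous_intros g)
    fix t
    have "f (ee t) \<in> circle" using assms(2) ee_circle[of t] by blast
    then have "norm (exp (g t)) = 1" using g(2)[of t] by (auto simp: circle_def)
    then have "Re (g t) = 0" by simp
    then have "g t = \<i> * of_real (Im (g t))" by (simp add: complex_eq_iff)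
    then show "f (ee t) = ee (Im (g t))" using g(2)[of t] by (simp add: ee_def)
  qed
qed

lemma no_int_between:
  assumes "0 < s - t" "s - t < 2 * pi"
  shows "\<not> (\<exists>m::int. s = t + 2 * pi * m)"
proof
  assume "\<exists>m::int. s = t + 2 * pi * m"
  then obtain m :: int where m: "s = t + 2 * pi * m" by blast
  then have "0 < 2 * pi * m" "2 * pi * m < 2 * pi" using assms by auto
  then have "0 < real_of_int m" "real_of_int m < 1"
    by (simp_all add: zero_less_mult_iff)
  then have "0 < m" "m < 1" by simp_all
  then show False by simp
qed

lemma lift_structure:
  fixes F :: "real \<Rightarrow> real" and f :: "complex \<Rightarrow> complex"
  assumes contF: "continuous_on UNIV F" and lift: "\<And>t. f (ee t) = ee (F t)"
    and injf: "inj_on f circle"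
  shows "(\<exists>t. F t = t) \<or> ((\<forall>s t. s < t \<longrightarrow> F s < F t) \<and>
            (\<forall>t m. F (t + 2*pi* of_int m) = F t + 2*pi* of_int m))"
proof -
  have contF': "continuous_on S F" for S using contF continuous_on_subset by blast
  have K: "\<exists>m'::int. s = t + 2*pi*m'" if "ee (F s) = ee (F t)" for s t
  proof -
    have "f (ee s) = f (ee t)" using that lift by simp
    then have "ee s = ee t" using injf by (auto dest: inj_onD)
    then show ?thesis using ee_eq by blast
  qed
  define h where "h t = (F (t + 2*pi) - F t) / (2*pi)" for t
  have hint: "h t \<in> \<int>" for t
  proof -
    have "ee (F (t + 2*pi)) = ee (F t)"
      using lift[of "t + 2*pi"] lift[of t] ee_shift[of t 1] by simp
    then obtain m :: int where "F (t + 2*pi) = F t + 2*pi*m" using ee_eq by blast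
    then have "h t = m" by (simp add: h_def)
    then show ?thesis by simp
  qed
  have "h constant_on UNIV"
  proof (rule continuous_discrete_range_constant)
    show "continuous_on UNIV h" unfolding h_def
      by (intro continuous_intros continuous_on_compose2[OF contF]) auto
    fix x :: real
    show "\<exists>e>0. \<forall>y. y \<in> UNIV \<and> h y \<noteq> h x \<longrightarrow> e \<le> norm (h y - h x)"
    proof (intro exI[of _ 1] conjI allI impI)
      fix y assume "y \<in> UNIV \<and> h y \<noteq> h x"
      moreover obtain a b :: int where "h y = a" "h x = b" using hint by (metis Ints_cases)
      ultimately show "1 \<le> norm (h y - h x)" by simp
    qed simp
  qed simp
  then obtain c where "\<And>t. h t = c" by (auto simp: constant_on_def)
  moreover obtain d :: int where "h 0 = d" using hint by (metis Ints_cases)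
  ultimately have hd: "h t = d" for t by simp
  have step: "F (t + 2*pi) = F t + 2*pi*d" for t
    using hd[of t] by (simp add: h_def field_simps)
  have shn: "F (t + 2*pi*real n) = F t + 2*pi*d*real n" for t n
  proof (induction n)
    case (Suc n)
    have "F (t + 2*pi*real (Suc n)) = F ((t + 2*pi*real n) + 2*pi)" by (simp add: algebra_simps)
    also have "\<dots> = F (t + 2*pi*real n) + 2*pi*d" by (rule step)
    also have "\<dots> = F t + 2*pi*d*real (Suc n)" using Suc by (simp add: algebra_simps)
    finally show ?case .
  qed simp
  have sh: "F (t + 2*pi* of_int m) = F t + 2*pi*d* of_int m" for t m
  proof (cases "m \<ge> 0")
    case True
    then show ?thesis using shn[of t "nat m"] by simp
  next
    case False
    define n where "n = nat (-m)"
    have m: "real_of_int m = - real n" using False by (simp add: n_def)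
    have "F t = F ((t + 2*pi* of_int m) + 2*pi*real n)" using m by simp
    also have "\<dots> = F (t + 2*pi* of_int m) + 2*pi*d*real n" by (rule shn)
    finally show ?thesis using m by simp
  qed
  have IV: "\<exists>x. a \<le> x \<and> x \<le> b \<and> F x = y" if "a \<le> b" "min (F a) (F b) \<le> y" "y \<le> max (F a) (F b)" for a b y
  proof (cases "F a \<le> F b")
    case True
    then show ?thesis using IVT'[of F a y b] that contF' by auto
  next
    case False
    then show ?thesis using IVT2'[of F b y a] that contF' by auto
  qed
  have noeq: "F s \<noteq> F t" if "0 < s - t" "s - t < 2*pi" for s t
    using K[of s t] no_int_between[OF that] by auto
  have d0: "d \<noteq> 0"
  proof
    assume "d = 0"
    then have F2: "F (2*pi) = F 0" using step[of 0] by simp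
    have "F pi \<noteq> F 0" using noeq[of pi 0] pi_gt_zero by simp
    define v where "v = (F 0 + F pi) / 2"
    have "v \<noteq> F 0" "v \<noteq> F pi" using \<open>F pi \<noteq> F 0\<close> by (auto simp: v_def)
    have mm: "min (F 0) (F pi) \<le> v" "v \<le> max (F 0) (F pi)" by (auto simp: v_def)
    obtain s where s: "0 \<le> s" "s \<le> pi" "F s = v"
      using IV[of 0 pi v] pi_gt_zero mm by auto
    obtain t where t: "pi \<le> t" "t \<le> 2*pi" "F t = v"
      using IV[of pi "2*pi" v] pi_gt_zero F2 mm by (auto simp: min.commute max.commute)
    have "s \<noteq> 0" "t \<noteq> 2*pi" "s \<noteq> pi" using s t \<open>v \<noteq> F 0\<close> \<open>v \<noteq> F pi\<close> F2 by auto
    then have "0 < t - s" "t - s < 2*pi" using s t by auto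
    then show False using noeq[of t s] s t by simp
  qed
  have injF: "F s = F t \<Longrightarrow> s = t" for s t
  proof -
    assume "F s = F t"
    then obtain m :: int where m: "s = t + 2*pi*m" using K by metis
    then have "F s = F t + 2*pi*d*m" using sh by simp
    with \<open>F s = F t\<close> have "d * m = 0" by simp
    with d0 have "m = 0" by simp
    with m show "s = t" by simp
  qed
  have sgn: "(F t - F s) * (F 1 - F 0) > 0" if "s < t" for s t
  proof (rule ccontr)
    assume "\<not> ?thesis"
    moreover have "F t - F s \<noteq> 0" "F 1 - F 0 \<noteq> 0" using injF that by force+
    ultimately have neg: "(F t - F s) * (F 1 - F 0) < 0" by (simp add: not_less le_less)
    define \<phi> where "\<phi> l = F ((1 - l) * t + l) - F ((1 - l) * s)" for l
    have c\<phi>: "continuous_on {0..1} \<phi>" unfolding \<phi>_def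
      by (intro continuous_intros continuous_on_compose2[OF contF]) auto
    have "\<exists>l. 0 \<le> l \<and> l \<le> 1 \<and> \<phi> l = 0"
    proof (cases "F t - F s < 0")
      case True
      then have "F 1 - F 0 > 0" using neg by (simp add: mult_less_0_iff)
      then show ?thesis using IVT'[of \<phi> 0 0 1] c\<phi> True by (auto simp: \<phi>_def)
    next
      case False
      then have "F 1 - F 0 < 0" "F t - F s > 0" using neg \<open>F t - F s \<noteq> 0\<close>
        by (auto simp: mult_less_0_iff)
      then show ?thesis using IVT2'[of \<phi> 1 0 0] c\<phi> by (auto simp: \<phi>_def)
    qed
    then obtain l where l: "0 \<le> l" "l \<le> 1" "\<phi> l = 0" by blast
    then have "(1 - l) * t + l = (1 - l) * s" using injF by (auto simp: \<phi>_def)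
    moreover have "(1 - l) * s < (1 - l) * t + l"
    proof (cases "l = 1")
      case False
      then have "(1 - l) * s < (1 - l) * t" using l that by simp
      then show ?thesis using l by linarith
    qed simp
    ultimately show False by simp
  qed
  show ?thesis
  proof (cases "F 0 < F 1")
    case False
    then have "F 1 < F 0" using injF[of 1 0] by fastforce
    then have dec: "F t < F s" if "s < t" for s t using sgn[OF that] by (simp add: mult_less_0_iff zero_less_mult_iff)
    define \<psi> where "\<psi> t = t - F t" for t
    have c\<psi>: "continuous_on S \<psi>" for S unfolding \<psi>_def by (intro continuous_intros contF')
    have "\<exists>t. \<psi> t = 0"
    proof (cases "F 0 \<ge> 0")
      case True
      have "F (F 0) \<le> F 0" using dec[of 0 "F 0"] True by (cases "F 0 = 0") auto
      then show ?thesis using IVT'[of \<psi> 0 0 "F 0"] c\<psi> True by (auto simp: \<psi>_def)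
    next
      case False
      have "F (F 0) > F 0" using dec[of "F 0" 0] False by auto
      then show ?thesis using IVT'[of \<psi> "F 0" 0 0] c\<psi> False by (auto simp: \<psi>_def)
    qed
    then obtain t where "\<psi> t = 0" by blast
    then have "F t = t" by (simp add: \<psi>_def)
    then show ?thesis by blast
  next
    case True
    then have inc: "F s < F t" if "s < t" for s t using sgn[OF that] by (simp add: zero_less_mult_iff)
    have "d > 0" using inc[of 0 "2*pi"] step[of 0] pi_gt_zero by (simp add: zero_less_mult_iff)
    have "d = 1"
    proof (rule ccontr)
      assume "d \<noteq> 1"
      with \<open>d > 0\<close> have "d \<ge> 2" by simp
      then have "F 0 + 2*pi \<le> F (2*pi)" using step[of 0] pi_gt_zero by simp
      then obtain t where t: "0 \<le> t" "t \<le> 2*pi" "F t = F 0 + 2*pi"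
        using IV[of 0 "2*pi" "F 0 + 2*pi"] pi_gt_zero inc[of 0 "2*pi"] by auto
      have "t \<noteq> 0" using t pi_gt_zero by auto
      moreover have "t \<noteq> 2*pi" using t step[of 0] \<open>d \<noteq> 1\<close> by auto
      moreover have "ee (F t) = ee (F 0)" using t ee_shift[of "F 0" 1] by simp
      ultimately show False using K[of t 0] no_int_between[of t 0] t by auto
    qed
    then show ?thesis using inc sh by auto
  qed
qed

lemma funpow_circle: "f ` circle \<subseteq> circle \<Longrightarrow> x \<in> circle \<Longrightarrow> (f^^n) x \<in> circle"
  by (induction n) auto

lemma orbit_subseq:
  assumes "f ` circle \<subseteq> circle" "x \<in> circle"
  shows "\<exists>r z. strict_mono r \<and> z \<in> circle \<and> ((\<lambda>j. (f^^(r j)) x) \<longlonglongrightarrow> z)"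
proof -
  have "compact circle" by (simp add: circle_def)
  then have sc: "seq_compact circle" by (rule compact_imp_seq_compact)
  have mem: "\<And>n. (f^^n) x \<in> circle" using funpow_circle[OF assms] by blast
  obtain z r where "z \<in> circle" "strict_mono r" "((\<lambda>n. (f^^n) x) \<circ> r) \<longlonglongrightarrow> z"
    using sc[unfolded seq_compact_def, rule_format, of "\<lambda>n. (f^^n) x", OF mem] by blast
  then show ?thesis by (auto simp: o_def)
qed

lemma close_return:
  assumes "f ` circle \<subseteq> circle" "x \<in> circle" "\<delta> > 0"
  shows "\<exists>m n. m < n \<and> dist ((f^^n) x) ((f^^m) x) < \<delta>"
proof -
  obtain r z where r: "strict_mono r" "(\<lambda>j. (f^^(r j)) x) \<longlonglongrightarrow> z"
    using orbit_subseq[OF assms(1,2)] by blast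
  have "Cauchy (\<lambda>j. (f^^(r j)) x)" by (rule LIMSEQ_imp_Cauchy[OF r(2)])
  then obtain M where M: "\<And>m n. m \<ge> M \<Longrightarrow> n \<ge> M \<Longrightarrow> dist ((f^^(r m)) x) ((f^^(r n)) x) < \<delta>"
    using assms(3) unfolding Cauchy_def by meson
  have "r M < r (Suc M)" using r(1) by (simp add: strict_mono_def)
  moreover have "dist ((f^^(r (Suc M))) x) ((f^^(r M)) x) < \<delta>" by (rule M) simp_all
  ultimately show ?thesis by blast
qed

lemma nw_sub: "nonwandering circle f \<subseteq> circle"
  by (auto simp: nonwandering_def)

lemma nw_nonempty:
  assumes "f ` circle \<subseteq> circle"
  shows "nonwandering circle f \<noteq> {}"
proof -
  have "1 \<in> circle" by (simp add: circle_def)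
  then obtain r z where r: "strict_mono r" "z \<in> circle" "(\<lambda>j. (f^^(r j)) 1) \<longlonglongrightarrow> z"
    using orbit_subseq[OF assms] by blast
  have "z \<in> nonwandering circle f"
    unfolding nonwandering_def
  proof (intro CollectI conjI allI impI r(2))
    fix U assume U: "openin (top_of_set circle) U \<and> z \<in> U"
    then obtain V where V: "open V" "U = circle \<inter> V" by (auto simp: openin_open)
    then have "z \<in> V" using U by auto
    then have "eventually (\<lambda>j. (f^^(r j)) 1 \<in> V) sequentially"
      using r(3) V(1) by (simp add: tendsto_def)
    then obtain J where J: "\<And>j. j \<ge> J \<Longrightarrow> (f^^(r j)) 1 \<in> V" by (auto simp: eventually_sequentially)
    have inU: "(f^^(r j)) 1 \<in> U" if "j \<ge> J" for j
      using J[OF that] funpow_circle[OF assms \<open>1 \<in> circle\<close>] V(2) by blast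
    have lt: "r J < r (Suc J)" using r(1) by (simp add: strict_mono_def)
    define n where "n = r (Suc J) - r J"
    have "r (Suc J) = n + r J" using lt by (simp add: n_def)
    then have "(f^^n) ((f^^(r J)) 1) = (f^^(r (Suc J))) 1"
      by (simp add: funpow_add)
    moreover have "(f^^(r J)) 1 \<in> U" by (rule inU) simp
    moreover have "(f^^(r (Suc J))) 1 \<in> U" by (rule inU) simp
    ultimately have "(f^^(r (Suc J))) 1 \<in> (f^^n) ` U \<inter> U"
      by (metis IntI image_eqI)
    moreover have "n \<ge> 1" using lt by (simp add: n_def)
    ultimately show "\<exists>n\<ge>1. (f^^n) ` U \<inter> U \<noteq> {}" by blast
  qed
  then show ?thesis by blast
qed

lemma nw_invariant:
  assumes "continuous_on circle f" "f ` circle \<subseteq> circle" "x \<in> nonwandering circle f"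
  shows "f x \<in> nonwandering circle f"
  unfolding nonwandering_def
proof (intro CollectI conjI allI impI)
  have xc: "x \<in> circle" using assms(3) by (simp add: nonwandering_def)
  then show "f x \<in> circle" using assms(2) by blast
  fix U assume U: "openin (top_of_set circle) U \<and> f x \<in> U"
  define V where "V = circle \<inter> f -` U"
  have "openin (top_of_set circle) V"
    using continuous_on_open_gen[where S=circle and T=circle and f=f] assms(1,2) U unfolding V_def
    by (auto simp: image_subset_iff_funcset)
  moreover have "x \<in> V" using xc U by (simp add: V_def)
  ultimately obtain n where n: "n \<ge> 1" "(f^^n) ` V \<inter> V \<noteq> {}"
    using assms(3) unfolding nonwandering_def by blast
  then obtain w where w: "w \<in> V" "(f^^n) w \<in> V" by blast
  have "(f^^n) (f w) = f ((f^^n) w)" by (simp add: funpow_swap1)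
  moreover have "f w \<in> U" "f ((f^^n) w) \<in> U" using w by (auto simp: V_def)
  ultimately have "(f^^n) (f w) \<in> (f^^n) ` U \<inter> U" by (metis IntI image_eqI)
  then show "\<exists>n\<ge>1. (f^^n) ` U \<inter> U \<noteq> {}" using n(1) by blast
qed

lemma nw_funpow:
  assumes "continuous_on circle f" "f ` circle \<subseteq> circle" "x \<in> nonwandering circle f"
  shows "(f^^n) x \<in> nonwandering circle f"
proof (induction n)
  case (Suc n)
  then show ?case using nw_invariant[OF assms(1,2) Suc] by simp
qed (use assms(3) in simp)

lemma lift_funpow: "(\<And>t. f (ee t) = ee (F t)) \<Longrightarrow> (f^^n) (ee t) = ee ((F^^n) t)"
  by (induction n) auto

lemma funpow_shift:
  assumes "\<And>t m. F (t + 2 * pi * of_int m) = F t + 2 * pi * of_int m"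
  shows "(F^^n) (t + 2 * pi * of_int m) = (F^^n) t + 2 * pi * of_int m"
  by (induction n) (auto simp: assms)

lemma funpow_strict:
  fixes F :: "real \<Rightarrow> real"
  assumes "\<And>s t. s < t \<Longrightarrow> F s < F t"
  and "s < t"
  shows "(F^^n) s < (F^^n) t"
proof (induction n)
  case (Suc n) then show ?case using assms(1)[OF Suc] by simp
qed (use assms(2) in simp)

lemma funpow_cont:
  fixes F :: "real \<Rightarrow> real"
  assumes "continuous_on UNIV F"
  shows "continuous_on UNIV (F^^n)"
proof (induction n)
  case 0
  have "(F^^0) = (\<lambda>x. x)" by (rule ext) simp
  then show ?case by (simp add: continuous_on_id)
next
  case (Suc n)
  then show ?case using continuous_on_compose[OF Suc, of F] assms
    by (simp add: continuous_on_subset)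
qed

lemma unif_F:
  fixes F :: "real \<Rightarrow> real"
  assumes contF: "continuous_on UNIV F"
    and sh: "\<And>t m. F (t + 2 * pi * of_int m) = F t + 2 * pi * of_int m"
    and e: "e > 0"
  shows "\<exists>\<eta>>0. \<forall>a b. \<bar>a - b\<bar> \<le> \<eta> \<longrightarrow> \<bar>F a - F b\<bar> \<le> e"
proof -
  have "uniformly_continuous_on {-2*pi..4*pi} F"
    by (rule compact_uniformly_continuous) (use contF continuous_on_subset in auto)
  then obtain d where d: "d > 0"
    "\<And>x x'. x \<in> {-2*pi..4*pi} \<Longrightarrow> x' \<in> {-2*pi..4*pi} \<Longrightarrow> dist x' x < d \<Longrightarrow> dist (F x') (F x) < e"
    using e unfolding uniformly_continuous_on_def by metis
  show ?thesis
  proof (intro exI[of _ "min (d/2) 1"] conjI allI impI)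
    show "min (d/2) 1 > 0" using d by simp
    fix a b assume ab: "\<bar>a - b\<bar> \<le> min (d/2) 1"
    define m where "m = \<lfloor>a / (2*pi)\<rfloor>"
    have m1: "real_of_int m \<le> a / (2*pi)" unfolding m_def by (rule of_int_floor_le)
    have m2: "a / (2*pi) < real_of_int m + 1" unfolding m_def by (rule real_of_int_floor_add_one_gt)
    define a0 where "a0 = a - 2 * pi * of_int m"
    define b0 where "b0 = b - 2 * pi * of_int m"
    have "2 * pi * real_of_int m \<le> a" using m1 pi_gt_zero by (simp add: field_simps)
    moreover have "a < 2 * pi * real_of_int m + 2 * pi" using m2 pi_gt_zero by (simp add: field_simps)
    ultimately have a0r: "0 \<le> a0" "a0 < 2 * pi" by (auto simp: a0_def)
    have "\<bar>a0 - b0\<bar> \<le> 1" "\<bar>a0 - b0\<bar> < d" using ab d by (auto simp: a0_def b0_def)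
    then have "a0 \<in> {-2*pi..4*pi}" "b0 \<in> {-2*pi..4*pi}" using a0r pi_gt_zero pi_gt3
      by (auto simp: abs_le_iff)
    then have "dist (F a0) (F b0) < e" using d(2)[of b0 a0] \<open>\<bar>a0 - b0\<bar> < d\<close>
      by (simp add: dist_real_def abs_minus_commute)
    moreover have "F a = F a0 + 2 * pi * of_int m" "F b = F b0 + 2 * pi * of_int m"
      using sh[of a0 m] sh[of b0 m] by (simp_all add: a0_def b0_def)
    ultimately show "\<bar>F a - F b\<bar> \<le> e" by (simp add: dist_real_def)
  qed
qed

lemma int_small: "\<bar>2 * pi * real_of_int m\<bar> < 2 * pi \<Longrightarrow> m = 0"
proof -
  assume "\<bar>2 * pi * real_of_int m\<bar> < 2 * pi"
  then have "\<bar>real_of_int m\<bar> < 1" using pi_gt_zero by (simp add: abs_mult)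
  then show "m = 0" by linarith
qed

theorem corollary2:
  fixes f :: "complex \<Rightarrow> complex"
  assumes "\<exists>g. homeomorphism circle circle f g"
    and "POTP (nonwandering circle f) f"
  shows "\<exists>x\<in>circle. \<exists>n\<ge>1. (f ^^ n) x = x"
proof -
  obtain g where hom: "homeomorphism circle circle f g" using assms(1) by blast
  have contf: "continuous_on circle f" and fimg: "f ` circle \<subseteq> circle"
    using hom by (auto simp: homeomorphism_def)
  have injf: "inj_on f circle"
    using hom by (metis homeomorphism_def inj_on_inverseI)
  obtain F where contF: "continuous_on UNIV F" and lift: "\<And>t. f (ee t) = ee (F t)"
    using lift_exists[OF contf fimg] by blast
  have cases: "(\<exists>t. F t = t) \<or> ((\<forall>s t. s < t \<longrightarrow> F s < F t) \<and>
            (\<forall>t m. F (t + 2 * pi * of_int m) = F t + 2 * pi * of_int m))"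
    by (rule lift_structure[OF contF lift injf])
  show ?thesis
  proof (cases "\<exists>t. F t = t")
    case True
    then obtain t where "F t = t" by blast
    then have "(f^^1) (ee t) = ee t" using lift[of t] by simp
    then show ?thesis by (intro bexI[of _ "ee t"]) auto
  next
    case False
    with cases have inc: "\<And>s t. s < t \<Longrightarrow> F s < F t"
      and shF: "\<And>t m. F (t + 2 * pi * of_int m) = F t + 2 * pi * of_int m" by auto
    obtain \<eta> where \<eta>: "\<eta> > 0" "\<And>a b. \<bar>a - b\<bar> \<le> \<eta> \<Longrightarrow> \<bar>F a - F b\<bar> \<le> pi/2"
      using unif_F[OF contF shF, of "pi/2"] pi_gt_zero by auto
    define \<eta>0 where "\<eta>0 = min \<eta> (pi/4)"
    have \<eta>0: "\<eta>0 > 0" "\<eta>0 \<le> \<eta>" "\<eta>0 \<le> pi/4" using \<eta> pi_gt_zero by (auto simp: \<eta>0_def)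
    obtain \<epsilon> where \<epsilon>: "\<epsilon> > 0"
      "\<And>s t. norm (ee s - ee t) \<le> \<epsilon> \<Longrightarrow> \<exists>m::int. \<bar>s - t - 2 * pi * m\<bar> \<le> \<eta>0"
      using ee_close[OF \<eta>0(1)] by blast
    define \<Omega> where "\<Omega> = nonwandering circle f"
    obtain \<delta> where \<delta>: "\<delta> > 0" "\<And>xs. (\<forall>i. xs i \<in> \<Omega>) \<and> (\<forall>i. dist (f (xs i)) (xs (i + 1)) \<le> \<delta>) \<Longrightarrow>
        (\<exists>x\<in>\<Omega>. \<forall>i. dist (int_iter \<Omega> f i x) (xs i) \<le> \<epsilon>)"
      using assms(2) \<epsilon>(1) unfolding POTP_def \<Omega>_def by metis
    obtain x0 where x0: "x0 \<in> \<Omega>" using nw_nonempty[OF fimg] by (auto simp: \<Omega>_def)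
    have x0c: "x0 \<in> circle" using x0 nw_sub by (auto simp: \<Omega>_def)
    obtain m n where mn: "m < n" "dist ((f^^n) x0) ((f^^m) x0) < min \<delta> \<epsilon>"
      using close_return[OF fimg x0c, of "min \<delta> \<epsilon>"] \<delta>(1) \<epsilon>(1) by auto
    define x' where "x' = (f^^m) x0"
    define N where "N = n - m"
    have N1: "N \<ge> 1" using mn by (simp add: N_def)
    have x'\<Omega>: "x' \<in> \<Omega>" unfolding x'_def \<Omega>_def by (rule nw_funpow[OF contf fimg x0[unfolded \<Omega>_def]])
    have fN: "(f^^N) x' = (f^^n) x0"
    proof -
      have "n = N + m" using mn by (simp add: N_def)
      then show ?thesis by (simp add: x'_def funpow_add)
    qed
    have ret: "dist ((f^^N) x') x' < min \<delta> \<epsilon>" using mn fN by (simp add: x'_def)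
    define xs where "xs i = (f^^nat (i mod int N)) x'" for i :: int
    have xs\<Omega>: "\<forall>i. xs i \<in> \<Omega>"
      unfolding xs_def \<Omega>_def by (intro allI nw_funpow[OF contf fimg x'\<Omega>[unfolded \<Omega>_def]])
    have xs\<delta>: "\<forall>i. dist (f (xs i)) (xs (i + 1)) \<le> \<delta>"
    proof
      fix i :: int
      have Npos: "int N > 0" using N1 by simp
      define k where "k = i mod int N"
      have k: "0 \<le> k" "k < int N" using Npos by (simp_all add: k_def)
      have i1: "(i + 1) mod int N = (k + 1) mod int N" by (simp add: k_def mod_add_left_eq)
      show "dist (f (xs i)) (xs (i + 1)) \<le> \<delta>"
      proof (cases "k + 1 < int N")
        case True
        then have "(i + 1) mod int N = k + 1" using i1 k by simp
        then have "xs (i + 1) = (f^^Suc (nat k)) x'" using k by (simp add: xs_def nat_add_distrib)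
        moreover have "xs i = (f^^nat k) x'" by (simp add: xs_def k_def)
        ultimately have "f (xs i) = xs (i + 1)" by simp
        then show ?thesis using \<delta>(1) by simp
      next
        case False
        then have kN: "k + 1 = int N" using k by simp
        then have "(i + 1) mod int N = 0" using i1 by simp
        then have "xs (i + 1) = x'" by (simp add: xs_def)
        moreover have "nat k = N - 1" using kN N1 k(1) by (auto simp: nat_eq_iff of_nat_diff)
        then have "xs i = (f^^(N - 1)) x'" by (simp add: xs_def k_def[symmetric])
        moreover have "f ((f^^(N - 1)) x') = (f^^N) x'"
        proof -
          have "N = Suc (N - 1)" using N1 by simp
          then show ?thesis by (metis funpow.simps(2) o_apply)
        qed
        ultimately show ?thesis using ret by simp
      qed
    qed
    obtain y where y: "y \<in> \<Omega>" "\<forall>i. dist (int_iter \<Omega> f i y) (xs i) \<le> \<epsilon>"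
      using \<delta>(2)[of xs] xs\<Omega> xs\<delta> by blast
    have shad: "dist ((f^^k) y) ((f^^(k mod N)) x') \<le> \<epsilon>" for k :: nat
    proof -
      have "int_iter \<Omega> f (int k) y = (f^^k) y" by (simp add: int_iter_def)
      moreover have "xs (int k) = (f^^(k mod N)) x'" by (simp add: xs_def zmod_int[symmetric])
      ultimately show ?thesis using y(2)[rule_format, of "int k"] by simp
    qed
    have yc: "y \<in> circle" and x'c: "x' \<in> circle" using y(1) x'\<Omega> nw_sub by (auto simp: \<Omega>_def)
    obtain Y where Y: "y = ee Y" using circle_ee[OF yc] by blast
    obtain X where X: "x' = ee X" using circle_ee[OF x'c] by blast
    have liftN: "(f^^j) (ee t) = ee ((F^^j) t)" for j t by (rule lift_funpow[where f=f and F=F, OF lift])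
    have "norm (ee ((F^^N) X) - ee X) \<le> \<epsilon>"
      using ret liftN[of N X] X by (simp add: dist_norm)
    then obtain p :: int where p: "\<bar>(F^^N) X - X - 2 * pi * p\<bar> \<le> \<eta>0" using \<epsilon>(2) by blast
    define Xs where "Xs j = (F^^(j mod N)) X + 2 * pi * of_int (p * int (j div N))" for j :: nat
    have eeXs: "ee (Xs j) = (f^^(j mod N)) x'" for j
    proof -
      have "ee (Xs j) = ee ((F^^(j mod N)) X)" unfolding Xs_def by (rule ee_shift)
      then show ?thesis using liftN X by simp
    qed
    have Xstep: "\<bar>F (Xs j) - Xs (Suc j)\<bar> \<le> \<eta>0" for j
    proof (cases "Suc (j mod N) = N")
      case True
      then have "Suc j mod N = 0" "Suc j div N = Suc (j div N)" by (simp_all add: mod_Suc div_Suc)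
      then have "Xs (Suc j) = X + 2 * pi * of_int (p * int (j div N)) + 2 * pi * p"
        by (simp add: Xs_def algebra_simps)
      moreover have "F (Xs j) = (F^^N) X + 2 * pi * of_int (p * int (j div N))"
      proof -
        have "F (Xs j) = F ((F^^(j mod N)) X) + 2 * pi * of_int (p * int (j div N))"
          unfolding Xs_def by (rule shF)
        also have "F ((F^^(j mod N)) X) = (F^^N) X" using True by (metis funpow.simps(2) o_apply)
        finally show ?thesis .
      qed
      ultimately show ?thesis using p \<eta>0 by simp
    next
      case False
      then have "Suc j mod N = Suc (j mod N)" "Suc j div N = j div N" by (simp_all add: mod_Suc div_Suc)
      moreover have "F (Xs j) = F ((F^^(j mod N)) X) + 2 * pi * of_int (p * int (j div N))"
        unfolding Xs_def by (rule shF)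
      ultimately have "Xs (Suc j) = F (Xs j)" unfolding Xs_def by simp
      then show ?thesis using \<eta>0 by simp
    qed
    have "norm (ee Y - ee X) \<le> \<epsilon>" using shad[of 0] X Y by (simp add: dist_norm)
    then obtain k :: int where k: "\<bar>Y - X - 2 * pi * k\<bar> \<le> \<eta>0" using \<epsilon>(2) by blast
    have track: "\<bar>(F^^j) Y - Xs j - 2 * pi * k\<bar> \<le> \<eta>0" for j
    proof (induction j)
      case 0 then show ?case using k by (simp add: Xs_def)
    next
      case (Suc j)
      define T where "T = (F^^j) Y"
      have FT: "F T = F (T - 2 * pi * k) + 2 * pi * k" using shF[of "T - 2 * pi * k" k] by simp
      have "\<bar>(T - 2 * pi * k) - Xs j\<bar> \<le> \<eta>" using Suc \<eta>0 by (simp add: T_def)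
      then have A: "\<bar>F (T - 2 * pi * k) - F (Xs j)\<bar> \<le> pi/2" by (rule \<eta>(2))
      have "norm (ee ((F^^Suc j) Y) - ee (Xs (Suc j))) \<le> \<epsilon>"
        using shad[of "Suc j"] liftN[of "Suc j" Y] Y eeXs[of "Suc j"] by (simp add: dist_norm)
      then obtain k' :: int where k': "\<bar>(F^^Suc j) Y - Xs (Suc j) - 2 * pi * k'\<bar> \<le> \<eta>0"
        using \<epsilon>(2) by blast
      have e1: "(F^^Suc j) Y = F T" by (simp add: T_def)
      have "\<bar>2 * pi * real_of_int k' - 2 * pi * real_of_int k\<bar> \<le> pi/2 + 2 * \<eta>0"
        using k' A FT Xstep[of j] e1 unfolding abs_le_iff by linarith
      then have "\<bar>2 * pi * real_of_int (k' - k)\<bar> < 2 * pi"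
        using \<eta>0 pi_gt_zero by (simp add: right_diff_distrib)
      then have "k' = k" using int_small[of "k' - k"] by simp
      then show ?case using k' by simp
    qed
    define G where "G t = (F^^N) t - 2 * pi * p" for t
    define Y' where "Y' = Y - 2 * pi * k"
    have Gj: "(G^^j) Y' = (F^^(j * N)) Y - 2 * pi * k - 2 * pi * p * j" for j
    proof (induction j)
      case 0 then show ?case by (simp add: Y'_def)
    next
      case (Suc j)
      have arg: "(G^^j) Y' = (F^^(j * N)) Y + 2 * pi * of_int (- k - p * int j)"
        using Suc by (simp add: algebra_simps)
      have "(G^^Suc j) Y' = G ((G^^j) Y')" by simp
      also have "\<dots> = (F^^N) ((F^^(j * N)) Y + 2 * pi * of_int (- k - p * int j)) - 2 * pi * p"
        unfolding arg G_def ..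
      also have "\<dots> = (F^^N) ((F^^(j * N)) Y) + 2 * pi * of_int (- k - p * int j) - 2 * pi * p"
        by (rule arg_cong[where f="\<lambda>u. u - 2 * pi * p"], rule funpow_shift[where F=F, OF shF])
      also have "(F^^N) ((F^^(j * N)) Y) = (F^^(Suc j * N)) Y"
        by (simp add: funpow_add add.commute)
      finally show ?case by (simp add: algebra_simps)
    qed
    have Gb: "\<bar>(G^^j) Y' - X\<bar> \<le> \<eta>0" for j
    proof -
      have "Xs (j * N) = X + 2 * pi * p * j" using N1 by (simp add: Xs_def)
      then show ?thesis using track[of "j * N"] Gj[of j] by (simp add: algebra_simps)
    qed
    have Gmono: "s < t \<Longrightarrow> G s < G t" for s t
      using funpow_strict[of F s t N] inc by (simp add: G_def)
    have Gmono': "s \<le> t \<Longrightarrow> G s \<le> G t" for s t using Gmono by (cases "s = t") (auto simp: le_less)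
    have Gcont: "continuous_on UNIV G" unfolding G_def
      by (intro continuous_intros funpow_cont[OF contF])
    define sq where "sq j = (G^^j) Y'" for j
    have "monoseq sq"
    proof (cases "Y' \<le> G Y'")
      case True
      have "sq j \<le> sq (Suc j)" for j
      proof (induction j)
        case 0 then show ?case using True by (simp add: sq_def)
      next
        case (Suc j) then show ?case using Gmono' by (simp add: sq_def)
      qed
      then have "incseq sq" by (rule incseq_SucI)
      then show ?thesis by (simp add: monoseq_iff)
    next
      case False
      have "sq (Suc j) \<le> sq j" for j
      proof (induction j)
        case 0 then show ?case using False by (simp add: sq_def)
      next
        case (Suc j) then show ?case using Gmono' by (simp add: sq_def)
      qed
      then have "decseq sq" by (rule decseq_SucI)
      then show ?thesis by (simp add: monoseq_iff)
    qed
    moreover have "Bseq sq"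
    proof (rule BseqI')
      fix j
      have "\<bar>sq j\<bar> \<le> \<bar>X\<bar> + \<eta>0" using Gb[of j] by (simp add: sq_def)
      then show "norm (sq j) \<le> \<bar>X\<bar> + \<eta>0" by simp
    qed
    ultimately have "convergent sq" using Bseq_monoseq_convergent by blast
    then obtain L where L: "sq \<longlonglongrightarrow> L" by (auto simp: convergent_def)
    have "isCont G L" using Gcont by (simp add: continuous_on_eq_continuous_at)
    then have "(\<lambda>j. G (sq j)) \<longlonglongrightarrow> G L" using L by (rule isCont_tendsto_compose)
    moreover have "(\<lambda>j. G (sq j)) = (\<lambda>j. sq (Suc j))" by (simp add: sq_def)
    ultimately have "(\<lambda>j. sq (Suc j)) \<longlonglongrightarrow> G L" by simp
    moreover have "(\<lambda>j. sq (Suc j)) \<longlonglongrightarrow> L" using L by (rule LIMSEQ_Suc)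
    ultimately have GL: "G L = L" using LIMSEQ_unique by blast
    then have "(F^^N) L = L + 2 * pi * p" by (simp add: G_def)
    then have "(f^^N) (ee L) = ee L" using liftN[of N L] by simp
    then show ?thesis using N1 by (intro bexI[of _ "ee L"]) auto
  qed
qed

end
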